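(* Let $(\bar A,\bar B=\mathbb I_m,\bar C=\mathbb I_p)$ be a structured system whose DAG of SCCs $\mathcal D_A$ is a hierarchical network, with feedback cost matrix $P$. If $\mathcal N_i$ and $\mathcal N_k$ are two distinct vertices of $\mathcal D_A$ in the same layer $L_f$, then $A(\mathcal N_i)\cap A(\mathcal N_k)=\emptyset$.
   Context: Dedicated: each column of $\bar B\in\{0,\star\}^{n\times m}$ and each row of $\bar C\in\{0,\star\}^{p\times n}$ has exactly one $\star$. Edges: $(x_j,x_i)$ iff $\bar A_{ij}=\star$, $(u_j,x_i)$ iff $\bar B_{ij}=\star$, $(x_j,y_i)$ iff $\bar C_{ij}=\star$. $\mathcal D_A$: vertices are the SCCs of the state digraph, with edges induced by edges between their states. Hierarchical network: a root with no incoming edge, every other vertex has exactly one parent. Layer $L_f$ = set of vertices at distance (number of edges of a shortest directed path) $f-1$ from the root. Ancestor/descendant via directed paths (including the vertex itself). For a vertex $\mathcal N$: $U(\mathcal N)$ = inputs with an edge into a state of an ancestor SCC of $\mathcal N$; $Y(\mathcal N)$ = outputs with an edge from a state of a descendant SCC of $\mathcal N$; $A(\mathcal N)=\{(y_j,u_i):y_j\in Y(\mathcal N),u_i\in U(\mathcal N)\}$. *)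

theory Defs
  imports Complex_Main
begin

text \<open>Pattern matrices are
  boolean functions: Abar i j = True iff entry (i,j) of Abar is a star (i,j < n);
  B i j for the n x m matrix Bbar; C i j for the p x n matrix Cbar.\<close>

definition dedicated_input :: "nat \<Rightarrow> nat \<Rightarrow> (nat \<Rightarrow> nat \<Rightarrow> bool) \<Rightarrow> bool" where
  "dedicated_input n m B \<longleftrightarrow> (\<forall>j<m. \<exists>!i. i < n \<and> B i j) \<and> (\<forall>i j. B i j \<longrightarrow> i < n \<and> j < m)"

definition dedicated_output :: "nat \<Rightarrow> nat \<Rightarrow> (nat \<Rightarrow> nat \<Rightarrow> bool) \<Rightarrow> bool" where
  "dedicated_output n p C \<longleftrightarrow> (\<forall>i<p. \<exists>!j. j < n \<and> C i j) \<and> (\<forall>i j. C i j \<longrightarrow> i < p \<and> j < n)"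

definition state_edges :: "nat \<Rightarrow> (nat \<Rightarrow> nat \<Rightarrow> bool) \<Rightarrow> (nat \<times> nat) set" where
  "state_edges n Abar = {(j, i). i < n \<and> j < n \<and> Abar i j}"

definition scc_of :: "nat \<Rightarrow> (nat \<Rightarrow> nat \<Rightarrow> bool) \<Rightarrow> nat \<Rightarrow> nat set" where
  "scc_of n Abar x = {y. y < n \<and> (x, y) \<in> (state_edges n Abar)\<^sup>* \<and> (y, x) \<in> (state_edges n Abar)\<^sup>*}"

definition sccs :: "nat \<Rightarrow> (nat \<Rightarrow> nat \<Rightarrow> bool) \<Rightarrow> nat set set" where
  "sccs n Abar = scc_of n Abar ` {..<n}"

definition dag_edges :: "nat \<Rightarrow> (nat \<Rightarrow> nat \<Rightarrow> bool) \<Rightarrow> (nat set \<times> nat set) set" where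
  "dag_edges n Abar = {(S, T). S \<in> sccs n Abar \<and> T \<in> sccs n Abar \<and> S \<noteq> T \<and>
      (\<exists>x\<in>S. \<exists>y\<in>T. (x, y) \<in> state_edges n Abar)}"

definition hierarchical :: "'v set \<Rightarrow> ('v \<times> 'v) set \<Rightarrow> 'v \<Rightarrow> bool" where
  "hierarchical V E r \<longleftrightarrow> r \<in> V \<and> (\<forall>u. (u, r) \<notin> E) \<and>
      (\<forall>v\<in>V. v \<noteq> r \<longrightarrow> (\<exists>!u. u \<in> V \<and> (u, v) \<in> E))"

definition layer :: "'v set \<Rightarrow> ('v \<times> 'v) set \<Rightarrow> 'v \<Rightarrow> nat \<Rightarrow> 'v set" where
  "layer V E r f = {v \<in> V. 1 \<le> f \<and> (r, v) \<in> E ^^ (f - 1) \<and> (\<forall>k < f - 1. (r, v) \<notin> E ^^ k)}"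

definition U_set :: "nat \<Rightarrow> (nat \<Rightarrow> nat \<Rightarrow> bool) \<Rightarrow> nat \<Rightarrow> (nat \<Rightarrow> nat \<Rightarrow> bool) \<Rightarrow> nat set \<Rightarrow> nat set" where
  "U_set n Abar m B N = {u. u < m \<and> (\<exists>N' x. (N', N) \<in> (dag_edges n Abar)\<^sup>* \<and> N' \<in> sccs n Abar \<and> x \<in> N' \<and> B x u)}"

definition Y_set :: "nat \<Rightarrow> (nat \<Rightarrow> nat \<Rightarrow> bool) \<Rightarrow> nat \<Rightarrow> (nat \<Rightarrow> nat \<Rightarrow> bool) \<Rightarrow> nat set \<Rightarrow> nat set" where
  "Y_set n Abar p C N = {y. y < p \<and> (\<exists>N' x. (N, N') \<in> (dag_edges n Abar)\<^sup>* \<and> N' \<in> sccs n Abar \<and> x \<in> N' \<and> C y x)}"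

definition A_set :: "nat \<Rightarrow> (nat \<Rightarrow> nat \<Rightarrow> bool) \<Rightarrow> nat \<Rightarrow> (nat \<Rightarrow> nat \<Rightarrow> bool) \<Rightarrow> nat \<Rightarrow> (nat \<Rightarrow> nat \<Rightarrow> bool) \<Rightarrow> nat set \<Rightarrow> (nat \<times> nat) set" where
  "A_set n Abar m B p C N = {(y, u). y \<in> Y_set n Abar p C N \<and> u \<in> U_set n Abar m B N}"

end

theory Submission
  imports Defs
begin

lemma hier_det:
  assumes h: "hierarchical V E r" and EV: "E \<subseteq> V \<times> V"
  shows "(x,z) \<in> E ^^ a \<Longrightarrow> (w,z) \<in> E ^^ a \<Longrightarrow> z \<in> V \<Longrightarrow> x = w"
proof (induction a arbitrary: z)
  case 0 then show ?case by simp
next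
  case (Suc a)
  from Suc.prems(1) obtain y where y1: "(x,y) \<in> E^^a" "(y,z) \<in> E" by auto
  from Suc.prems(2) obtain y' where y2: "(w,y') \<in> E^^a" "(y',z) \<in> E" by auto
  have "z \<noteq> r" using h y1(2) unfolding hierarchical_def by blast
  hence "y = y'" using h y1(2) y2(2) EV Suc.prems(3) unfolding hierarchical_def by blast
  moreover have "y \<in> V" using y1(2) EV by blast
  ultimately show ?case using Suc.IH y1(1) y2(1) by blast
qed

lemma hier_depth:
  assumes h: "hierarchical V E r" and EV: "E \<subseteq> V \<times> V"
    and a: "(r,z) \<in> E ^^ a" and b: "(r,z) \<in> E ^^ b" and z: "z \<in> V"
  shows "a = b"
proof -
  have *: False if "(r,z) \<in> E ^^ a" "(r,z) \<in> E ^^ (d + a)" "d > 0" for a d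
  proof -
    from that(2) obtain y where "(r,y) \<in> E^^d" "(y,z) \<in> E^^a"
      by (auto simp: relpow_add)
    hence "y = r" using hier_det[OF h EV] that(1) z by blast
    with \<open>(r,y) \<in> E^^d\<close> have "(r,r) \<in> E^^d" by simp
    then obtain d' where "d = Suc d'" using \<open>d>0\<close> by (cases d) auto
    with \<open>(r,r) \<in> E^^d\<close> obtain q where "(q,r) \<in> E" by auto
    thus False using h unfolding hierarchical_def by blast
  qed
  show ?thesis
  proof (cases a b rule: linorder_cases)
    case less
    then obtain d where "b = d + a" "d > 0" by (metis add.commute less_imp_add_positive)
    thus ?thesis using * a b by blast
  next
    case greater
    then obtain d where "a = d + b" "d > 0" by (metis add.commute less_imp_add_positive)
    thus ?thesis using * a b by blast
  qed simp
qed

lemma scc_member: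
  assumes "N \<in> sccs n Abar" "x \<in> N"
  shows "N = scc_of n Abar x"
proof -
  obtain a where N: "N = scc_of n Abar a" using assms(1) unfolding sccs_def by auto
  show ?thesis using assms(2) unfolding N scc_of_def
    by (auto intro: rtrancl_trans)
qed

theorem corollary3:
  fixes n m p :: nat and Abar B C :: "nat \<Rightarrow> nat \<Rightarrow> bool"
    and P :: "nat \<Rightarrow> nat \<Rightarrow> real"
    and r Ni Nk :: "nat set" and f :: nat
  assumes "dedicated_input n m B"
    and "dedicated_output n p C"
    and "hierarchical (sccs n Abar) (dag_edges n Abar) r"
    and "Ni \<in> layer (sccs n Abar) (dag_edges n Abar) r f"
    and "Nk \<in> layer (sccs n Abar) (dag_edges n Abar) r f"
    and "Ni \<noteq> Nk"
  shows "A_set n Abar m B p C Ni \<inter> A_set n Abar m B p C Nk = {}"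
proof (rule ccontr)
  let ?V = "sccs n Abar" and ?E = "dag_edges n Abar"
  have EV: "?E \<subseteq> ?V \<times> ?V" unfolding dag_edges_def by auto
  assume "A_set n Abar m B p C Ni \<inter> A_set n Abar m B p C Nk \<noteq> {}"
  then obtain yy where "yy \<in> Y_set n Abar p C Ni" "yy \<in> Y_set n Abar p C Nk"
    unfolding A_set_def by auto
  then obtain N1 x1 N2 x2 where
    n1: "(Ni, N1) \<in> ?E\<^sup>*" "N1 \<in> ?V" "x1 \<in> N1" "C yy x1" and
    n2: "(Nk, N2) \<in> ?E\<^sup>*" "N2 \<in> ?V" "x2 \<in> N2" "C yy x2" and yp: "yy < p"
    unfolding Y_set_def by blast
  have "x1 = x2" using assms(2) n1(4) n2(4) yp unfolding dedicated_output_def by blast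
  hence "N1 = N2" using scc_member n1 n2 by metis
  from n1(1) obtain k where k: "(Ni, N1) \<in> ?E^^k" using rtrancl_imp_relpow by blast
  from n2(1) obtain j where j: "(Nk, N1) \<in> ?E^^j" using rtrancl_imp_relpow \<open>N1 = N2\<close> by blast
  have ri: "(r, Ni) \<in> ?E^^(f-1)" and rk: "(r, Nk) \<in> ?E^^(f-1)"
    using assms(4,5) unfolding layer_def by auto
  have "(r, N1) \<in> ?E^^(f-1+k)" using ri k by (auto simp: relpow_add)
  moreover have "(r, N1) \<in> ?E^^(f-1+j)" using rk j by (auto simp: relpow_add)
  ultimately have "f-1+k = f-1+j" using hier_depth[OF assms(3) EV] n1(2) by blast
  hence "k = j" by simp
  hence "Ni = Nk" using hier_det[OF assms(3) EV] k j n1(2) by blast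
  with assms(6) show False by simp
qed

end
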